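(* If $K$ is a compact subset of $\mathfrak S_1(\mathbb T)$, then $$\lim_{\varepsilon\to0}\sup_{S\in K}d\big(S(\varepsilon),\mathbf 1\big)=0.$$
   Context: Rigged sets: each point has a multiplicity in $\{0,1,\dots,\infty\}$; an enumeration lists each point according to its multiplicity. $\mathfrak S_1(\mathbb T)$ is the set of countable rigged subsets of the unit circle $\mathbb T$ (arc-length metric) in which $1$ has infinite multiplicity, with no other accumulation point and with $d(S,\mathbf 1)<\infty$, where $d(S,T)=\inf\sum_j\mathrm{dist}(s_j,t_j)$ over enumerations and $\mathbf 1$ is $1$ with infinite multiplicity. For $S\in\mathfrak S_1(\mathbb T)$ and $\varepsilon>0$, $S(\varepsilon)$ is the rigged set of points of $S$ (with their multiplicities) at distance less than $\varepsilon$ from $1$. *)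

theory Defs
  imports "HOL-Analysis.Analysis" "HOL-Library.Extended_Nat" "HOL-Library.Extended_Nonnegative_Real"
begin

text \<open>The unit circle is represented inside the complex plane. A rigged set is a
multiplicity function assigning to every point a multiplicity in {0,1,...,infinity}.\<close>

type_synonym rigged = "complex \<Rightarrow> enat"

definition arcdist :: "complex \<Rightarrow> complex \<Rightarrow> real" where
  "arcdist z w = \<bar>Arg (z / w)\<bar>"

definition seq_mult :: "(nat \<Rightarrow> complex) \<Rightarrow> complex \<Rightarrow> enat" where
  "seq_mult s z = (if finite {j. s j = z} then enat (card {j. s j = z}) else \<infinity>)"

definition is_enum :: "(nat \<Rightarrow> complex) \<Rightarrow> rigged \<Rightarrow> bool" where
  "is_enum s S \<longleftrightarrow> (\<forall>z. seq_mult s z = S z)"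

definition rdist :: "rigged \<Rightarrow> rigged \<Rightarrow> ennreal" where
  "rdist S T = (INF st \<in> {(s, t). is_enum s S \<and> is_enum t T}.
                  (\<Sum>j. ennreal (arcdist (fst st j) (snd st j))))"

definition one_rig :: rigged where
  "one_rig z = (if z = 1 then \<infinity> else 0)"

definition S1T :: "rigged set" where
  "S1T = {S. (\<forall>z. S z \<noteq> 0 \<longrightarrow> cmod z = 1)
            \<and> countable {z. S z \<noteq> 0}
            \<and> S 1 = \<infinity>
            \<and> (\<forall>z. z islimpt {w. S w \<noteq> 0} \<longrightarrow> z = 1)
            \<and> rdist S one_rig < \<infinity>}"

text \<open>S(eps): the points of S at distance less than eps from 1, with their multiplicities.\<close>
definition rig_near1 :: "rigged \<Rightarrow> real \<Rightarrow> rigged" where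
  "rig_near1 S \<epsilon> z = (if arcdist z 1 < \<epsilon> then S z else 0)"

definition S1T_open :: "rigged set \<Rightarrow> bool" where
  "S1T_open U \<longleftrightarrow> U \<subseteq> S1T \<and>
     (\<forall>S\<in>U. \<exists>r>0. {T \<in> S1T. rdist S T < ennreal r} \<subseteq> U)"

definition S1T_compact :: "rigged set \<Rightarrow> bool" where
  "S1T_compact K \<longleftrightarrow> K \<subseteq> S1T \<and>
     (\<forall>\<U>. (\<forall>U\<in>\<U>. S1T_open U) \<and> K \<subseteq> \<Union>\<U> \<longrightarrow>
          (\<exists>\<F>\<subseteq>\<U>. finite \<F> \<and> K \<subseteq> \<Union>\<F>))"

end

theory Submission imports Defs begin

lemma abs_Arg_times_le:
  assumes "w \<noteq> 0" "z \<noteq> 0"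
  shows "\<bar>Arg (w * z)\<bar> \<le> \<bar>Arg w\<bar> + \<bar>Arg z\<bar>"
proof -
  have b: "-pi < Arg w" "Arg w \<le> pi" "-pi < Arg z" "Arg z \<le> pi"
    using mpi_less_Arg Arg_le_pi by auto
  show ?thesis using Arg_times'[OF assms] b by (auto split: if_splits)
qed

lemma abs_Arg_inverse: "\<bar>Arg (inverse z)\<bar> = \<bar>Arg z\<bar>"
  by (simp add: Arg_inverse)

lemma arcdist_sym: "arcdist z w = arcdist w z"
  unfolding arcdist_def by (metis abs_Arg_inverse inverse_divide)

lemma arcdist_tri:
  assumes "y \<noteq> 0"
  shows "arcdist x z \<le> arcdist x y + arcdist y z"
proof (cases "x = 0 \<or> z = 0")
  case True then show ?thesis by (auto simp: arcdist_def)
next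
  case False
  have "x / z = (x / y) * (y / z)" using assms False by (simp add: field_simps)
  then show ?thesis unfolding arcdist_def
    using abs_Arg_times_le[of "x/y" "y/z"] assms False by simp
qed

lemma arcdist_self: "arcdist z z = 0"
  by (cases "z = 0") (auto simp: arcdist_def Arg_zero)

lemma emeasure_fiber_eq:
  assumes "seq_mult u z = seq_mult v z"
  shows "emeasure (count_space UNIV) (u -` {z}) = emeasure (count_space UNIV) (v -` {z})"
proof -
  have e: "u -` {z} = {j. u j = z}" "v -` {z} = {j. v j = z}" by auto
  show ?thesis using assms unfolding e seq_mult_def
    by (auto simp: emeasure_count_space split: if_splits)
qed

lemma emeasure_preimage_eq:
  assumes "\<And>z. seq_mult u z = seq_mult v z"
  shows "emeasure (count_space UNIV) (u -` A) = emeasure (count_space UNIV) (v -` A)"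
proof -
  define I where "I = A \<inter> (range u \<union> range v)"
  have cI: "countable I" unfolding I_def by auto
  have dj: "disjoint_family_on (\<lambda>z. w -` {z}) I" for w :: "nat \<Rightarrow> complex"
    by (auto simp: disjoint_family_on_def)
  have "u -` A = (\<Union>z\<in>I. u -` {z})" "v -` A = (\<Union>z\<in>I. v -` {z})" unfolding I_def by auto
  then show ?thesis
    using emeasure_UN_countable[OF _ cI dj, where M="count_space UNIV"]
          emeasure_fiber_eq[OF assms]
    by (simp cong: nn_integral_cong)
qed

lemma enum_sum_inv:
  fixes f :: "complex \<Rightarrow> ennreal"
  assumes "is_enum u R" "is_enum v R"
  shows "(\<Sum>j. f (u j)) = (\<Sum>j. f (v j))"
proof -
  have m: "\<And>w. seq_mult u w = seq_mult v w" using assms by (simp add: is_enum_def)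
  have D: "distr (count_space UNIV) (count_space UNIV) u = distr (count_space UNIV) (count_space UNIV) v"
    by (rule measure_eqI) (auto simp: emeasure_distr emeasure_preimage_eq[OF m])
  have "(\<Sum>j. f (u j)) = integral\<^sup>N (distr (count_space UNIV) (count_space UNIV) u) f"
    by (simp add: nn_integral_distr nn_integral_count_space_nat)
  also have "\<dots> = integral\<^sup>N (distr (count_space UNIV) (count_space UNIV) v) f" by (simp add: D)
  also have "\<dots> = (\<Sum>j. f (v j))"
    by (simp add: nn_integral_distr nn_integral_count_space_nat)
  finally show ?thesis .
qed


lemma enum_one: "is_enum t one_rig \<Longrightarrow> t = (\<lambda>_. 1)"
proof
  fix j assume e: "is_enum t one_rig"
  show "t j = 1"
  proof (rule ccontr)
    assume ne: "t j \<noteq> 1"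
    have "seq_mult t (t j) = 0" using e ne by (simp add: is_enum_def one_rig_def)
    moreover have "j \<in> {i. t i = t j}" by simp
    ultimately show False unfolding seq_mult_def
      by (auto split: if_splits simp: zero_enat_def card_eq_0_iff)
  qed
qed

lemma enum_one_ex: "is_enum (\<lambda>_. 1) one_rig"
  by (auto simp: is_enum_def seq_mult_def one_rig_def zero_enat_def)

lemma rdist_one:
  assumes "is_enum u R"
  shows "rdist R one_rig = (\<Sum>j. ennreal (arcdist (u j) 1))"
proof -
  define B where "B = {(s, t). is_enum s R \<and> t = (\<lambda>_::nat. 1::complex)}"
  have A: "{(s, t). is_enum s R \<and> is_enum t one_rig} = B"
    unfolding B_def using enum_one enum_one_ex by blast
  have c: "(\<Sum>j. ennreal (arcdist (fst st j) (snd st j))) = (\<Sum>j. ennreal (arcdist (u j) 1))"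
    if "st \<in> B" for st
  proof -
    obtain s t where st: "st = (s, t)" by (cases st)
    have "is_enum s R" "t = (\<lambda>_. 1)" using that st by (auto simp: B_def)
    then show ?thesis using st enum_sum_inv[OF _ assms, where f="\<lambda>z. ennreal (arcdist z 1)"] by simp
  qed
  have ne: "B \<noteq> {}" unfolding B_def using assms by blast
  have "rdist R one_rig = (INF st\<in>B. (\<Sum>j. ennreal (arcdist (u j) 1)))"
    unfolding rdist_def A by (rule INF_cong[OF refl c])
  also have "\<dots> = (\<Sum>j. ennreal (arcdist (u j) 1))" by (rule INF_const[OF ne])
  finally show ?thesis .
qed

lemma enum_support: "is_enum u T \<Longrightarrow> T (u j) \<noteq> 0"
proof
  assume e: "is_enum u T" and z: "T (u j) = 0"
  have "seq_mult u (u j) = 0" using e z by (simp add: is_enum_def)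
  moreover have "j \<in> {i. u i = u j}" by simp
  ultimately show False unfolding seq_mult_def
    by (auto split: if_splits simp: zero_enat_def card_eq_0_iff)
qed

lemma enum_near:
  assumes e: "is_enum u T" and T1: "T 1 = \<infinity>" and ep: "\<epsilon> > 0"
  shows "is_enum (\<lambda>j. if arcdist (u j) 1 < \<epsilon> then u j else 1) (rig_near1 T \<epsilon>)"
  unfolding is_enum_def
proof
  fix z
  define u' where "u' = (\<lambda>j. if arcdist (u j) 1 < \<epsilon> then u j else 1)"
  have m: "seq_mult u z = T z" for z using e by (simp add: is_enum_def)
  show "seq_mult u' z = rig_near1 T \<epsilon> z"
  proof (cases "z = 1")
    case True
    have "infinite {j. u j = 1}" using m[of 1] T1 by (auto simp: seq_mult_def split: if_splits)
    moreover have "{j. u j = 1} \<subseteq> {j. u' j = 1}" by (auto simp: u'_def)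
    ultimately have "infinite {j. u' j = 1}" using finite_subset by blast
    then show ?thesis using True T1 ep by (simp add: seq_mult_def rig_near1_def arcdist_self)
  next
    case False
    show ?thesis
    proof (cases "arcdist z 1 < \<epsilon>")
      case True
      then have "{j. u' j = z} = {j. u j = z}" using False by (auto simp: u'_def)
      then have "seq_mult u' z = seq_mult u z" unfolding seq_mult_def by simp
      then show ?thesis using m[of z] True by (simp add: rig_near1_def)
    next
      case c: False
      then have "{j. u' j = z} = {}" using False by (auto simp: u'_def)
      then show ?thesis using c by (simp add: seq_mult_def rig_near1_def zero_enat_def)
    qed
  qed
qed

definition F :: "rigged \<Rightarrow> real \<Rightarrow> ennreal" where
  "F T \<epsilon> = rdist (rig_near1 T \<epsilon>) one_rig"

lemma F_formula:
  assumes e: "is_enum u T" and T1: "T 1 = \<infinity>" and ep: "\<epsilon> > 0"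
  shows "F T \<epsilon> = (\<Sum>j. ennreal (if arcdist (u j) 1 < \<epsilon> then arcdist (u j) 1 else 0))"
  unfolding F_def rdist_one[OF enum_near[OF assms]]
  by (rule suminf_cong) (auto simp: arcdist_self)

lemma F_mono:
  assumes e: "is_enum u T" and T1: "T 1 = \<infinity>" and ep: "\<epsilon> > 0" and le: "\<epsilon> \<le> \<epsilon>'"
  shows "F T \<epsilon> \<le> F T \<epsilon>'"
  unfolding F_formula[OF e T1 ep] F_formula[OF e T1 order.strict_trans2[OF ep le]]
  by (rule suminf_le) (use le in \<open>auto intro!: ennreal_leI\<close>)


lemma S1T_D:
  assumes "T \<in> S1T"
  shows "T 1 = \<infinity>" "\<And>z. T z \<noteq> 0 \<Longrightarrow> cmod z = 1" "rdist T one_rig < \<infinity>"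
  using assms by (auto simp: S1T_def)

lemma S1T_enum_nz: "T \<in> S1T \<Longrightarrow> is_enum u T \<Longrightarrow> u j \<noteq> 0"
  using S1T_D(2)[of T "u j"] enum_support[of u T j] by auto

lemma S1T_enum_ex:
  assumes "T \<in> S1T" obtains u where "is_enum u T"
proof -
  have "rdist T one_rig < top" using S1T_D(3)[OF assms] by simp
  then obtain st where "st \<in> {(s, t). is_enum s T \<and> is_enum t one_rig}"
    unfolding rdist_def INF_less_iff by blast
  then show ?thesis using that by auto
qed

lemma ennreal_le_add: "0 \<le> x \<Longrightarrow> 0 \<le> y \<Longrightarrow> z \<le> x + y \<Longrightarrow> ennreal z \<le> ennreal x + ennreal y"
  by (metis ennreal_leI ennreal_plus)

lemma F_shift:
  assumes T: "T \<in> S1T" and T': "T' \<in> S1T" and d: "rdist T T' < ennreal s" and ep: "\<epsilon> > 0"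
  shows "F T' \<epsilon> \<le> F T (\<epsilon> + s) + ennreal s"
proof -
  from d obtain p q where p: "is_enum p T" and q: "is_enum q T'"
    and sm: "(\<Sum>j. ennreal (arcdist (p j) (q j))) < ennreal s"
    unfolding rdist_def INF_less_iff by auto
  have s0: "s > 0"
  proof (rule ccontr)
    assume "\<not> s > 0" then have "ennreal s = 0" by (simp add: ennreal_neg)
    with sm show False by simp
  qed
  have c: "arcdist (p j) (q j) < s" for j
  proof -
    have "ennreal (arcdist (p j) (q j)) = (\<Sum>i\<in>{j}. ennreal (arcdist (p i) (q i)))" by simp
    also have "\<dots> \<le> (\<Sum>j. ennreal (arcdist (p j) (q j)))"
      by (rule sum_le_suminf) (auto intro: summableI)
    also have "\<dots> < ennreal s" by (rule sm)
    finally show ?thesis by (simp add: ennreal_less_iff arcdist_def)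
  qed
  have pn: "p j \<noteq> 0" and qn: "q j \<noteq> 0" for j using S1T_enum_nz T T' p q by auto
  have pw: "ennreal (if arcdist (q j) 1 < \<epsilon> then arcdist (q j) 1 else 0)
      \<le> ennreal (if arcdist (p j) 1 < \<epsilon> + s then arcdist (p j) 1 else 0) + ennreal (arcdist (p j) (q j))" for j
  proof -
    have t1: "arcdist (q j) 1 \<le> arcdist (p j) (q j) + arcdist (p j) 1"
      using arcdist_tri[OF pn[of j], of "q j" 1] arcdist_sym[of "q j" "p j"] by simp
    have t2: "arcdist (p j) 1 \<le> arcdist (p j) (q j) + arcdist (q j) 1"
      using arcdist_tri[OF qn[of j], of "p j" 1] by simp
    have nn: "0 \<le> arcdist a b" for a b by (simp add: arcdist_def)
    have "(if arcdist (q j) 1 < \<epsilon> then arcdist (q j) 1 else 0)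
       \<le> (if arcdist (p j) 1 < \<epsilon> + s then arcdist (p j) 1 else 0) + arcdist (p j) (q j)"
      using t1 t2 c[of j] nn[of "p j" "q j"] nn[of "p j" 1] by auto
    then show ?thesis using nn ennreal_le_add by (simp del: ennreal_plus)
  qed
  have "F T' \<epsilon> = (\<Sum>j. ennreal (if arcdist (q j) 1 < \<epsilon> then arcdist (q j) 1 else 0))"
    by (rule F_formula[OF q S1T_D(1)[OF T'] ep])
  also have "\<dots> \<le> (\<Sum>j. ennreal (if arcdist (p j) 1 < \<epsilon> + s then arcdist (p j) 1 else 0) + ennreal (arcdist (p j) (q j)))"
    by (rule suminf_le[OF pw]) (auto intro: summableI)
  also have "\<dots> = (\<Sum>j. ennreal (if arcdist (p j) 1 < \<epsilon> + s then arcdist (p j) 1 else 0)) + (\<Sum>j. ennreal (arcdist (p j) (q j)))"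
    by (rule suminf_add[symmetric]) (auto intro: summableI)
  also have "\<dots> = F T (\<epsilon> + s) + (\<Sum>j. ennreal (arcdist (p j) (q j)))"
    using F_formula[OF p S1T_D(1)[OF T], of "\<epsilon> + s"] ep s0 by simp
  also have "\<dots> \<le> F T (\<epsilon> + s) + ennreal s"
    using sm by (intro add_left_mono) simp
  finally show ?thesis .
qed

lemma F_small:
  assumes T: "T \<in> S1T" and eta: "\<eta> > 0"
  shows "\<exists>\<delta>>0. F T \<delta> < ennreal \<eta>"
proof -
  obtain u where u: "is_enum u T" using S1T_enum_ex[OF T] by blast
  define f where "f j = arcdist (u j) 1" for j
  have f0: "0 \<le> f j" for j by (simp add: f_def arcdist_def)
  have "(\<Sum>j. ennreal (f j)) \<noteq> top"
    using S1T_D(3)[OF T] rdist_one[OF u] by (simp add: f_def)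
  then have sf: "summable f" using summable_suminf_not_top f0 by blast
  obtain N where N: "\<And>n. n \<ge> N \<Longrightarrow> norm (\<Sum>i. f (i + n)) < \<eta>"
    using suminf_exist_split[OF eta sf] by blast
  define D where "D = insert 1 (f ` {j. j < N \<and> f j > 0})"
  define \<delta> where "\<delta> = Min D"
  have fD: "finite D" unfolding D_def by auto
  have Dpos: "\<forall>x\<in>D. x > 0" unfolding D_def by auto
  have Dne: "D \<noteq> {}" unfolding D_def by simp
  have dpos: "\<delta> > 0" unfolding \<delta>_def using Min_gr_iff[OF fD Dne] Dpos by blast
  define g where "g j = (if f j < \<delta> then f j else 0)" for j
  have g0: "0 \<le> g j" for j using f0 by (simp add: g_def)
  have gf: "g j \<le> f j" for j using f0 by (simp add: g_def)
  have gN: "g j = 0" if "j < N" for j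
  proof (cases "f j > 0")
    case True
    then have "f j \<in> D" using that by (auto simp: D_def)
    then have "\<delta> \<le> f j" unfolding \<delta>_def by (rule Min_le[OF fD])
    then show ?thesis by (simp add: g_def)
  next
    case False then show ?thesis using f0[of j] by (simp add: g_def)
  qed
  have sg: "summable g" by (rule summable_comparison_test'[OF sf, where N=0]) (use g0 gf in simp)
  have "(\<Sum>j. g j) = (\<Sum>i. g (i + N)) + (\<Sum>i<N. g i)" by (rule suminf_split_initial_segment[OF sg])
  also have "\<dots> = (\<Sum>i. g (i + N))" using gN by simp
  also have "\<dots> \<le> (\<Sum>i. f (i + N))"
    by (rule suminf_le[OF _ summable_ignore_initial_segment[OF sg] summable_ignore_initial_segment[OF sf]]) (rule gf)
  also have "\<dots> < \<eta>" using N[of N] by simp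
  finally have lt: "(\<Sum>j. g j) < \<eta>" .
  have "F T \<delta> = (\<Sum>j. ennreal (g j))"
    unfolding g_def f_def by (rule F_formula[OF u S1T_D(1)[OF T] dpos])
  also have "\<dots> = ennreal (\<Sum>j. g j)" by (rule suminf_ennreal2[OF g0 sg])
  also have "\<dots> < ennreal \<eta>" using lt eta by (simp add: ennreal_lessI)
  finally show ?thesis using dpos by blast
qed


theorem mainTheorem14:
  assumes "S1T_compact K"
  shows "((\<lambda>\<epsilon>. SUP S\<in>K. rdist (rig_near1 S \<epsilon>) one_rig) \<longlongrightarrow> 0) (at_right (0::real))"
proof (rule order_tendstoI)
  fix a :: ennreal assume "a < 0" then show "\<forall>\<^sub>F x in at_right 0. a < (SUP S\<in>K. rdist (rig_near1 S x) one_rig)"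
    by simp
next
  fix a :: ennreal assume a: "0 < a"
  obtain b where b: "0 < b" "b < a" using dense[OF a] by blast
  define \<eta> where "\<eta> = enn2real b"
  have bt: "b \<noteq> top" using b by auto
  have eta: "\<eta> > 0" using b bt by (simp add: \<eta>_def enn2real_positive_iff less_top)
  have eta_a: "ennreal \<eta> < a" using b bt by (simp add: \<eta>_def ennreal_enn2real less_top)
  have KS: "K \<subseteq> S1T" using assms by (simp add: S1T_compact_def)
  define U where "U \<delta> = {T \<in> S1T. \<exists>r>0. F T (\<delta> + r) + ennreal r < ennreal \<eta>}" for \<delta>
  have openU: "S1T_open (U \<delta>)" if dp: "\<delta> > 0" for \<delta>
    unfolding S1T_open_def
  proof (intro conjI ballI)
    show "U \<delta> \<subseteq> S1T" by (auto simp: U_def)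
  next
    fix T assume "T \<in> U \<delta>"
    then obtain r where T: "T \<in> S1T" and r: "r > 0" and Fr: "F T (\<delta> + r) + ennreal r < ennreal \<eta>"
      by (auto simp: U_def)
    have "{T' \<in> S1T. rdist T T' < ennreal (r/2)} \<subseteq> U \<delta>"
    proof
      fix T' assume "T' \<in> {T' \<in> S1T. rdist T T' < ennreal (r/2)}"
      then have T': "T' \<in> S1T" and d: "rdist T T' < ennreal (r/2)" by auto
      have "F T' (\<delta> + r/2) \<le> F T (\<delta> + r/2 + r/2) + ennreal (r/2)"
        by (rule F_shift[OF T T' d]) (use dp r in auto)
      then have "F T' (\<delta> + r/2) + ennreal (r/2) \<le> F T (\<delta> + r) + (ennreal (r/2) + ennreal (r/2))"
        by (simp add: add.assoc add_right_mono)
      also have "ennreal (r/2) + ennreal (r/2) = ennreal r" using r by (simp flip: ennreal_plus)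
      finally have "F T' (\<delta> + r/2) + ennreal (r/2) < ennreal \<eta>" using Fr by simp
      then show "T' \<in> U \<delta>" using T' r by (auto simp: U_def intro!: exI[of _ "r/2"])
    qed
    then show "\<exists>r>0. {T' \<in> S1T. rdist T T' < ennreal r} \<subseteq> U \<delta>" using r
      by (intro exI[of _ "r/2"]) auto
  qed
  have cover: "K \<subseteq> \<Union>(U ` {\<delta>. \<delta> > 0})"
  proof
    fix T assume TK: "T \<in> K"
    then have T: "T \<in> S1T" using KS by auto
    obtain u where u: "is_enum u T" using S1T_enum_ex[OF T] by blast
    obtain \<delta>0 where d0: "\<delta>0 > 0" and Fd: "F T \<delta>0 < ennreal (\<eta>/2)"
      using F_small[OF T, of "\<eta>/2"] eta by auto
    define r where "r = min (\<delta>0/2) (\<eta>/4)"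
    have r: "r > 0" using d0 eta by (simp add: r_def)
    have "F T (\<delta>0/2 + r) \<le> F T \<delta>0"
      by (rule F_mono[OF u S1T_D(1)[OF T]]) (use d0 r in \<open>auto simp: r_def\<close>)
    then have "F T (\<delta>0/2 + r) < ennreal (\<eta>/2)" using Fd by simp
    then have "F T (\<delta>0/2 + r) + ennreal r < ennreal (\<eta>/2) + ennreal r"
      using ennreal_add_left_cancel_less[of "ennreal r"] by (simp add: add.commute)
    also have "\<dots> = ennreal (\<eta>/2 + r)" using r eta by simp
    also have "\<dots> \<le> ennreal \<eta>" using r eta by (intro ennreal_leI) (simp add: r_def)
    finally have "T \<in> U (\<delta>0/2)" using T r by (auto simp: U_def)
    moreover have "\<delta>0/2 \<in> {\<delta>. \<delta> > 0}" using d0 by simp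
    ultimately show "T \<in> \<Union>(U ` {\<delta>. \<delta> > 0})" by blast
  qed
  obtain \<F> where Fsub: "\<F> \<subseteq> U ` {\<delta>. \<delta> > 0}" and fin: "finite \<F>" and KF: "K \<subseteq> \<Union>\<F>"
    using assms cover openU unfolding S1T_compact_def by (metis (no_types, lifting) imageE mem_Collect_eq)
  obtain D where D: "D \<subseteq> {\<delta>. \<delta> > 0}" "finite D" "\<F> = U ` D"
    using finite_subset_image[OF fin Fsub] by blast
  define e0 where "e0 = Min (insert 1 D)"
  have e0: "e0 > 0" unfolding e0_def using D by auto
  have e0le: "e0 \<le> \<delta>" if "\<delta> \<in> D" for \<delta> unfolding e0_def using D that by simp
  show "\<forall>\<^sub>F x in at_right 0. (SUP S\<in>K. rdist (rig_near1 S x) one_rig) < a"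
    unfolding eventually_at_right_field
  proof (intro exI[of _ e0] conjI allI impI)
    show "0 < e0" by (rule e0)
  next
    fix \<epsilon> :: real assume ep: "0 < \<epsilon>" "\<epsilon> < e0"
    have "(SUP S\<in>K. rdist (rig_near1 S \<epsilon>) one_rig) \<le> ennreal \<eta>"
    proof (rule SUP_least)
      fix T assume TK: "T \<in> K"
      then have T: "T \<in> S1T" using KS by auto
      obtain u where u: "is_enum u T" using S1T_enum_ex[OF T] by blast
      obtain \<delta> where dD: "\<delta> \<in> D" and TU: "T \<in> U \<delta>" using KF TK D(3) by auto
      then obtain r where r: "r > 0" and Fr: "F T (\<delta> + r) + ennreal r < ennreal \<eta>"
        by (auto simp: U_def)
      have "F T \<epsilon> \<le> F T (\<delta> + r)"
        by (rule F_mono[OF u S1T_D(1)[OF T] ep(1)]) (use e0le[OF dD] ep r in auto)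
      also have "\<dots> \<le> F T (\<delta> + r) + ennreal r" by simp
      finally show "rdist (rig_near1 T \<epsilon>) one_rig \<le> ennreal \<eta>" using Fr by (simp add: F_def)
    qed
    then show "(SUP S\<in>K. rdist (rig_near1 S \<epsilon>) one_rig) < a" using eta_a by simp
  qed
qed

end
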